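(* Let $R$ be a non-degenerate $n$-ary relation on a domain $\mathcal{D}$ with $n\ge2$. Then $\mathrm{ter}(R)\ge n-2$. In particular, every non-degenerate ternary relation is bond irreducible. If moreover $|R|\le|\mathcal{D}|$, then $\mathrm{ter}(R)=n-2$. In particular, $\mathrm{ter}(R)=n-2$ for all such (non-degenerate, $n\ge2$) relations on infinite domains $\mathcal{D}$.
   Context: Relations are attributed: $R\subseteq\mathcal{D}^\Sigma$, $\Sigma$ finite, arity $n=|\Sigma|$; $\pi_\Gamma$ restricts tuples to $\Gamma$; the join of $R_i\subseteq\mathcal{D}^{\Lambda_i}$ is $\{a\in\mathcal{D}^{\cup\Lambda_i}:a|_{\Lambda_i}\in R_i\ \forall i\}$. $R$ is degenerate if there is a partition $\Sigma=\Lambda_1\cup\dots\cup\Lambda_m$ with $m>1$, all $\Lambda_i\neq\emptyset$, and $R^{\Lambda_i}\subseteq\mathcal{D}^{\Lambda_i}$ with $R=\{a:a|_{\Lambda_i}\in R^{\Lambda_i}\ \forall i\}$. Bonds: relations $R_i\subseteq\mathcal{D}^{\Lambda_i}$ are bondable if no attribute lies in three or more $\Lambda_i$; their bond is $\pi_\Gamma[R_1\Join\dots\Join R_m]$, $\Gamma$ the set of attributes lying in exactly one $\Lambda_i$. $R$ is bond reducible if it is a bond of factors $R_i\subseteq\mathcal{D}^{\Lambda_i}$ with $0<|\Lambda_i|<|\Sigma|$, otherwise bond irreducible. A bond is subternaric if all factors have arity $\le3$. The ternarity $\mathrm{ter}(R)$ is the minimal number of factors of arity $3$ over all representations of $R$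 as a subternaric bond (a relation of arity $\le3$ counts as a one-factor bond of itself), and $\infty$ if none exists. *)

theory Defs
  imports "HOL-Library.FuncSet" "HOL-Library.Extended_Nat"
begin

text \<open>Attributes are natural numbers (an infinite supply of attribute names, so that
bonds may use arbitrarily many auxiliary attributes).\<close>

definition tuples :: "nat set \<Rightarrow> (nat \<Rightarrow> 'd) set" where
  "tuples S = PiE S (\<lambda>_. UNIV)"

definition is_rel :: "nat set \<Rightarrow> (nat \<Rightarrow> 'd) set \<Rightarrow> bool" where
  "is_rel S R \<longleftrightarrow> finite S \<and> R \<subseteq> tuples S"

definition proj :: "nat set \<Rightarrow> (nat \<Rightarrow> 'd) set \<Rightarrow> (nat \<Rightarrow> 'd) set" where
  "proj G R = (\<lambda>a. restrict a G) ` R"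

definition join :: "(nat set \<times> (nat \<Rightarrow> 'd) set) list \<Rightarrow> (nat \<Rightarrow> 'd) set" where
  "join Fs = {a \<in> tuples (\<Union>i<length Fs. fst (Fs!i)).
               \<forall>i<length Fs. restrict a (fst (Fs!i)) \<in> snd (Fs!i)}"

definition occ :: "(nat set \<times> (nat \<Rightarrow> 'd) set) list \<Rightarrow> nat \<Rightarrow> nat" where
  "occ Fs x = card {i. i < length Fs \<and> x \<in> fst (Fs!i)}"

definition bondable :: "(nat set \<times> (nat \<Rightarrow> 'd) set) list \<Rightarrow> bool" where
  "bondable Fs \<longleftrightarrow> (\<forall>i<length Fs. is_rel (fst (Fs!i)) (snd (Fs!i))) \<and> (\<forall>x. occ Fs x \<le> 2)"

definition bond_attrs :: "(nat set \<times> (nat \<Rightarrow> 'd) set) list \<Rightarrow> nat set" where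
  "bond_attrs Fs = {x. occ Fs x = 1}"

definition bond :: "(nat set \<times> (nat \<Rightarrow> 'd) set) list \<Rightarrow> (nat \<Rightarrow> 'd) set" where
  "bond Fs = proj (bond_attrs Fs) (join Fs)"

definition is_bond_of :: "nat set \<Rightarrow> (nat \<Rightarrow> 'd) set \<Rightarrow> (nat set \<times> (nat \<Rightarrow> 'd) set) list \<Rightarrow> bool" where
  "is_bond_of S R Fs \<longleftrightarrow> bondable Fs \<and> bond_attrs Fs = S \<and> bond Fs = R"

definition bond_reducible :: "nat set \<Rightarrow> (nat \<Rightarrow> 'd) set \<Rightarrow> bool" where
  "bond_reducible S R \<longleftrightarrow> (\<exists>Fs. is_bond_of S R Fs \<and>
      (\<forall>i<length Fs. 0 < card (fst (Fs!i)) \<and> card (fst (Fs!i)) < card S))"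

definition bond_irreducible :: "nat set \<Rightarrow> (nat \<Rightarrow> 'd) set \<Rightarrow> bool" where
  "bond_irreducible S R \<longleftrightarrow> \<not> bond_reducible S R"

definition subternaric :: "(nat set \<times> (nat \<Rightarrow> 'd) set) list \<Rightarrow> bool" where
  "subternaric Fs \<longleftrightarrow> (\<forall>i<length Fs. card (fst (Fs!i)) \<le> 3)"

definition ternarity :: "nat set \<Rightarrow> (nat \<Rightarrow> 'd) set \<Rightarrow> enat" where
  "ternarity S R = Inf {enat (card {i. i < length Fs \<and> card (fst (Fs!i)) = 3}) | Fs.
                          is_bond_of S R Fs \<and> subternaric Fs}"

definition degenerate :: "nat set \<Rightarrow> (nat \<Rightarrow> 'd) set \<Rightarrow> bool" where
  "degenerate S R \<longleftrightarrow> (\<exists>Ps::(nat set \<times> (nat \<Rightarrow> 'd) set) list. 1 < length Ps \<and>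
      (\<forall>i<length Ps. fst (Ps!i) \<noteq> {} \<and> is_rel (fst (Ps!i)) (snd (Ps!i))) \<and>
      (\<forall>i<length Ps. \<forall>j<length Ps. i \<noteq> j \<longrightarrow> fst (Ps!i) \<inter> fst (Ps!j) = {}) \<and>
      (\<Union>i<length Ps. fst (Ps!i)) = S \<and>
      R = {a \<in> tuples S. \<forall>i<length Ps. restrict a (fst (Ps!i)) \<in> snd (Ps!i)})"

end

theory Submission
  imports Defs
begin


definition occI :: "nat set \<Rightarrow> (nat \<Rightarrow> nat set) \<Rightarrow> nat \<Rightarrow> nat" where
  "occI I A x = card {i\<in>I. x \<in> A i}"

definition internal :: "nat set \<Rightarrow> (nat \<Rightarrow> nat set) \<Rightarrow> nat set" where
  "internal J A = {x. \<exists>i\<in>J. \<exists>j\<in>J. i \<noteq> j \<and> x \<in> A i \<and> x \<in> A j}"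

lemma grow:
  assumes fin: "finite I" and finA: "\<forall>i\<in>I. finite (A i)"
    and occ2: "\<forall>x. occI I A x \<le> 2"
    and nosplit: "\<forall>J. J \<subseteq> I \<longrightarrow> J \<noteq> {} \<longrightarrow> J \<noteq> I \<longrightarrow> (\<exists>i\<in>J. \<exists>j\<in>I-J. A i \<inter> A j \<noteq> {})"
  shows "1 \<le> k \<Longrightarrow> k \<le> card I \<Longrightarrow> \<exists>J\<subseteq>I. card J = k \<and> k \<le> Suc (card (internal J A))"
proof (induction k)
  case 0 then show ?case by simp
next
  case (Suc k)
  show ?case
  proof (cases "k = 0")
    case True
    from Suc.prems have "I \<noteq> {}" by auto
    then obtain i where "i \<in> I" by auto
    then show ?thesis using True by (intro exI[of _ "{i}"]) auto
  next
    case False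
    then obtain J where J: "J \<subseteq> I" "card J = k" "k \<le> Suc (card (internal J A))"
      using Suc by auto
    have Jne: "J \<noteq> {}" using J False by auto
    have JI: "J \<noteq> I" using J Suc.prems by auto
    obtain i j where ij: "i \<in> J" "j \<in> I - J" "A i \<inter> A j \<noteq> {}"
      using nosplit[rule_format, OF J(1) Jne JI] by blast
    then obtain x where x: "x \<in> A i" "x \<in> A j" by auto
    have finU: "finite (\<Union>i\<in>I. A i)" using fin finA by auto
    have intsub: "internal J' A \<subseteq> (\<Union>i\<in>I. A i)" if "J' \<subseteq> I" for J'
      using that unfolding internal_def by auto
    have xnot: "x \<notin> internal J A"
    proof
      assume "x \<in> internal J A"
      then obtain i' j' where ij': "i' \<in> J" "j' \<in> J" "i' \<noteq> j'" "x \<in> A i'" "x \<in> A j'"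
        unfolding internal_def by auto
      then have "{i', j', j} \<subseteq> {l\<in>I. x \<in> A l}" using J ij x by auto
      then have "card {i', j', j} \<le> occI I A x"
        unfolding occI_def by (intro card_mono) (auto simp: fin)
      moreover have "card {i', j', j} = 3"
      proof -
        have "j \<notin> {i', j'}" using ij ij' by auto
        then show ?thesis using ij'(3) by simp
      qed
      ultimately have "3 \<le> occI I A x" by simp
      then show False using occ2[rule_format, of x] by simp
    qed
    have "insert x (internal J A) \<subseteq> internal (insert j J) A"
      using ij x unfolding internal_def by fastforce
    then have "card (insert x (internal J A)) \<le> card (internal (insert j J) A)"
      by (intro card_mono) (use finite_subset[OF intsub finU] J ij in auto)
    moreover have "card (insert x (internal J A)) = Suc (card (internal J A))"
      using xnot finite_subset[OF intsub[OF J(1)] finU] by simp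
    moreover have "card (insert j J) = Suc k" using J ij finite_subset[OF J(1) fin] by auto
    ultimately show ?thesis using J ij by (intro exI[of _ "insert j J"]) auto
  qed
qed

lemma sum_card_occ:
  assumes "finite I" "\<forall>i\<in>I. finite (A i)"
  shows "(\<Sum>i\<in>I. card (A i)) = (\<Sum>x\<in>(\<Union>i\<in>I. A i). occI I A x)"
proof -
  let ?U = "\<Union>i\<in>I. A i"
  have finU: "finite ?U" using assms by auto
  have "(\<Sum>i\<in>I. card (A i)) = (\<Sum>i\<in>I. \<Sum>x\<in>?U. if x \<in> A i then 1 else 0)"
  proof (rule sum.cong[OF refl])
    fix i assume "i \<in> I"
    then have "A i = {x\<in>?U. x \<in> A i}" by auto
    then show "card (A i) = (\<Sum>x\<in>?U. if x \<in> A i then 1 else 0)"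
      using sum.inter_filter[OF finU, of "\<lambda>_. 1::nat" "\<lambda>x. x \<in> A i"] by simp
  qed
  also have "\<dots> = (\<Sum>x\<in>?U. \<Sum>i\<in>I. if x \<in> A i then 1 else 0)" by (rule sum.swap)
  also have "\<dots> = (\<Sum>x\<in>?U. occI I A x)" unfolding occI_def
    using sum.inter_filter[OF assms(1), of "\<lambda>_. 1::nat"] by simp
  finally show ?thesis .
qed

lemma count_nosplit:
  assumes fin: "finite I" and finA: "\<forall>i\<in>I. finite (A i)" and le3: "\<forall>i\<in>I. card (A i) \<le> 3"
    and occ2: "\<forall>x. occI I A x \<le> 2"
    and nosplit: "\<forall>J. J \<subseteq> I \<longrightarrow> J \<noteq> {} \<longrightarrow> J \<noteq> I \<longrightarrow> (\<exists>i\<in>J. \<exists>j\<in>I-J. A i \<inter> A j \<noteq> {})"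
  shows "card {x. occI I A x = 1} \<le> card {i\<in>I. card (A i) = 3} + 2"
proof (cases "I = {}")
  case True
  then show ?thesis by (simp add: occI_def)
next
  case False
  let ?U = "\<Union>i\<in>I. A i"
  have finU: "finite ?U" using fin finA by auto
  have occpos: "occI I A x \<ge> 1" if "x \<in> ?U" for x
  proof -
    from that obtain i where "i \<in> I" "x \<in> A i" by auto
    then have "{i\<in>I. x \<in> A i} \<noteq> {}" by auto
    then show ?thesis unfolding occI_def using fin by (simp add: Suc_le_eq card_gt_0_iff)
  qed
  have occU: "x \<in> ?U" if "occI I A x \<ge> 1" for x
  proof (rule ccontr)
    assume "x \<notin> ?U"
    then have "{i\<in>I. x \<in> A i} = {}" by auto
    then have "occI I A x = 0" unfolding occI_def by (simp only: card.empty)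
    then show False using that by simp
  qed
  have X: "{x. occI I A x = 1} = {x\<in>?U. occI I A x = 1}" using occU by auto
  have E: "internal I A = {x\<in>?U. occI I A x = 2}"
  proof (intro set_eqI iffI)
    fix x assume "x \<in> internal I A"
    then obtain i j where ij: "i \<in> I" "j \<in> I" "i \<noteq> j" "x \<in> A i" "x \<in> A j"
      unfolding internal_def by auto
    then have "{i, j} \<subseteq> {l\<in>I. x \<in> A l}" by auto
    then have "card {i,j} \<le> occI I A x" unfolding occI_def by (intro card_mono) (auto simp: fin)
    then have "occI I A x \<ge> 2" using ij by simp
    then show "x \<in> {x\<in>?U. occI I A x = 2}" using occ2 occU[of x] by (simp add: le_antisym)
  next
    fix x assume "x \<in> {x\<in>?U. occI I A x = 2}"
    then have "\<not> card {l\<in>I. x \<in> A l} \<le> Suc 0" unfolding occI_def by simp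
    then obtain i j where "i \<in> {l\<in>I. x \<in> A l}" "j \<in> {l\<in>I. x \<in> A l}" "i \<noteq> j"
      using card_le_Suc0_iff_eq[of "{l\<in>I. x \<in> A l}"] fin by auto
    then show "x \<in> internal I A" unfolding internal_def by auto
  qed
  have "(\<Sum>x\<in>?U. occI I A x) = (\<Sum>x\<in>?U. (if occI I A x = 1 then 1 else 0) + 2 * (if occI I A x = 2 then 1 else 0))"
  proof (rule sum.cong[OF refl])
    fix x assume "x \<in> ?U"
    then have "occI I A x = 1 \<or> occI I A x = 2" using occpos[of x] occ2 by (metis le_antisym not_less_eq_eq numeral_2_eq_2 One_nat_def)
    then show "occI I A x = (if occI I A x = 1 then 1 else 0) + 2 * (if occI I A x = 2 then 1 else 0)" by auto
  qed
  also have "\<dots> = card {x\<in>?U. occI I A x = 1} + 2 * card {x\<in>?U. occI I A x = 2}"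
    by (simp add: sum.distrib sum_distrib_left[symmetric] sum.inter_filter[OF finU, symmetric])
  finally have s1: "(\<Sum>i\<in>I. card (A i)) = card {x. occI I A x = 1} + 2 * card (internal I A)"
    using sum_card_occ[OF fin finA] X E by simp
  have "(\<Sum>i\<in>I. card (A i)) \<le> (\<Sum>i\<in>I. 2 + (if card (A i) = 3 then 1 else 0))"
    using le3 by (intro sum_mono) (auto simp: le_Suc_eq numeral_3_eq_3)
  also have "\<dots> = 2 * card I + card {i\<in>I. card (A i) = 3}"
    by (simp only: sum.distrib sum.inter_filter[OF fin, symmetric]) (simp add: mult.commute)
  finally have s2: "card {x. occI I A x = 1} + 2 * card (internal I A) \<le> 2 * card I + card {i\<in>I. card (A i) = 3}"
    using s1 by simp
  have "card I \<ge> 1" using False fin by (simp add: Suc_le_eq card_gt_0_iff)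
  then obtain J where J: "J \<subseteq> I" "card J = card I" "card I \<le> Suc (card (internal J A))"
    using grow[OF fin finA occ2 nosplit] by blast
  have "J = I" using J fin by (metis card_subset_eq)
  then have "card I \<le> Suc (card (internal I A))" using J by simp
  then show ?thesis using s2 by linarith
qed



definition joinI :: "nat set \<Rightarrow> (nat \<Rightarrow> nat set) \<Rightarrow> (nat \<Rightarrow> (nat \<Rightarrow> 'd) set) \<Rightarrow> (nat \<Rightarrow> 'd) set" where
  "joinI I A Rr = {a \<in> tuples (\<Union>i\<in>I. A i). \<forall>i\<in>I. restrict a (A i) \<in> Rr i}"

lemma mem_tuples: "a \<in> tuples S \<longleftrightarrow> (\<forall>x. x \<notin> S \<longrightarrow> a x = undefined)"
  by (auto simp: tuples_def PiE_def extensional_def)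

lemma restrict_tuples: "a \<in> tuples S \<Longrightarrow> restrict a S = a"
  by (auto simp: mem_tuples restrict_def)

lemma restrict_in_tuples[simp]: "restrict a S \<in> tuples S"
  by (auto simp: mem_tuples)

lemma proj_tuples: "proj S B \<subseteq> tuples S"
  by (auto simp: proj_def)

lemma empty_degenerate:
  assumes "card S \<ge> 2"
  shows "degenerate S ({} :: (nat \<Rightarrow> 'd) set)"
proof -
  have fin: "finite S" using assms by (metis card.infinite not_numeral_le_zero)
  obtain x where x: "x \<in> S" using assms by fastforce
  have ne: "S - {x} \<noteq> {}"
  proof
    assume "S - {x} = {}"
    then have "S = {x}" using x by auto
    then show False using assms by simp
  qed
  let ?Ps = "[({x}, {} :: (nat \<Rightarrow> 'd) set), (S - {x}, tuples (S - {x}))]"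
  have u: "(\<Union>i<length ?Ps. fst (?Ps!i)) = S"
    using x by (auto simp: lessThan_Suc less_Suc_eq numeral_2_eq_2)
  have "\<forall>i<length ?Ps. fst (?Ps!i) \<noteq> {} \<and> is_rel (fst (?Ps!i)) (snd (?Ps!i))"
    using ne fin by (auto simp: less_Suc_eq is_rel_def)
  moreover have "\<forall>i<length ?Ps. \<forall>j<length ?Ps. i \<noteq> j \<longrightarrow> fst (?Ps!i) \<inter> fst (?Ps!j) = {}"
    by (auto simp: less_Suc_eq)
  moreover have "({} :: (nat \<Rightarrow> 'd) set) = {a \<in> tuples S. \<forall>i<length ?Ps. restrict a (fst (?Ps!i)) \<in> snd (?Ps!i)}"
    by auto
  ultimately show ?thesis unfolding degenerate_def using u
    by (intro exI[of _ ?Ps]) simp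
qed

lemma product_join:
  assumes disj: "\<forall>i\<in>J. \<forall>j\<in>K. A i \<inter> A j = {}"
    and XJ: "XJ \<subseteq> (\<Union>i\<in>J. A i)" and XK: "XK \<subseteq> (\<Union>i\<in>K. A i)"
  shows "proj (XJ \<union> XK) (joinI (J \<union> K) A Rr) =
    {b \<in> tuples (XJ \<union> XK). restrict b XJ \<in> proj XJ (joinI J A Rr) \<and> restrict b XK \<in> proj XK (joinI K A Rr)}"
    (is "?L = ?R")
proof
  let ?UJ = "\<Union>i\<in>J. A i" and ?UK = "\<Union>i\<in>K. A i"
  show "?L \<subseteq> ?R"
  proof
    fix b assume "b \<in> ?L"
    then obtain a where a: "a \<in> joinI (J \<union> K) A Rr" and b: "b = restrict a (XJ \<union> XK)"
      unfolding proj_def by auto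
    have "restrict a ?UJ \<in> joinI J A Rr"
    proof -
      have "restrict (restrict a ?UJ) (A i) \<in> Rr i" if "i \<in> J" for i
      proof -
        have "restrict (restrict a ?UJ) (A i) = restrict a (A i)"
          using that by (auto simp: restrict_def)
        then show ?thesis using a that unfolding joinI_def by auto
      qed
      then show ?thesis unfolding joinI_def by auto
    qed
    note j1 = this
    have e1: "restrict b XJ = restrict (restrict a ?UJ) XJ"
    proof
      fix x show "restrict b XJ x = restrict (restrict a ?UJ) XJ x"
      proof (cases "x \<in> XJ")
        case True
        then have "x \<in> ?UJ" using XJ by blast
        then show ?thesis using True b by (simp add: restrict_def)
      qed (simp add: restrict_def)
    qed
    have j2: "restrict a ?UK \<in> joinI K A Rr"
    proof -
      have "restrict (restrict a ?UK) (A i) \<in> Rr i" if "i \<in> K" for i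
      proof -
        have "restrict (restrict a ?UK) (A i) = restrict a (A i)"
          using that by (auto simp: restrict_def)
        then show ?thesis using a that unfolding joinI_def by auto
      qed
      then show ?thesis unfolding joinI_def by auto
    qed
    have e2: "restrict b XK = restrict (restrict a ?UK) XK"
    proof
      fix x show "restrict b XK x = restrict (restrict a ?UK) XK x"
      proof (cases "x \<in> XK")
        case True
        then have "x \<in> ?UK" using XK by blast
        then show ?thesis using True b by (simp add: restrict_def)
      qed (simp add: restrict_def)
    qed
    have "restrict b XJ \<in> proj XJ (joinI J A Rr)" unfolding proj_def by (rule image_eqI[where f="\<lambda>a. restrict a XJ", OF e1 j1])
    moreover have "restrict b XK \<in> proj XK (joinI K A Rr)" unfolding proj_def by (rule image_eqI[where f="\<lambda>a. restrict a XK", OF e2 j2])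
    moreover have "b \<in> tuples (XJ \<union> XK)" using b by simp
    ultimately show "b \<in> ?R" by blast
  qed
  show "?R \<subseteq> ?L"
  proof
    fix b assume "b \<in> ?R"
    then obtain a1 a2 where b: "b \<in> tuples (XJ \<union> XK)"
      and a1: "a1 \<in> joinI J A Rr" "restrict b XJ = restrict a1 XJ"
      and a2: "a2 \<in> joinI K A Rr" "restrict b XK = restrict a2 XK"
      unfolding proj_def by auto
    define a where "a = (\<lambda>x. if x \<in> ?UJ then a1 x else if x \<in> ?UK then a2 x else undefined)"
    have "a \<in> tuples (\<Union>i\<in>J \<union> K. A i)" unfolding a_def mem_tuples by auto
    moreover have "restrict a (A i) \<in> Rr i" if "i \<in> J \<union> K" for i
    proof (cases "i \<in> J")
      case True
      then have "restrict a (A i) = restrict a1 (A i)" unfolding a_def restrict_def by auto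
      then show ?thesis using a1 True unfolding joinI_def by auto
    next
      case False
      then have i: "i \<in> K" using that by auto
      then have "A i \<inter> ?UJ = {}" using disj by auto
      note dj = this
      have "restrict a (A i) = restrict a2 (A i)"
      proof
        fix x show "restrict a (A i) x = restrict a2 (A i) x"
        proof (cases "x \<in> A i")
          case True
          then have "x \<notin> ?UJ" using dj by blast
          moreover have "x \<in> ?UK" using i True by blast
          ultimately show ?thesis using True by (simp add: a_def restrict_def)
        qed (simp add: restrict_def)
      qed
      then show ?thesis using a2 i unfolding joinI_def by auto
    qed
    ultimately have "a \<in> joinI (J \<union> K) A Rr" unfolding joinI_def by auto
    moreover have "b = restrict a (XJ \<union> XK)"
    proof
      fix x
      show "b x = restrict a (XJ \<union> XK) x"
      proof (cases "x \<in> XJ")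
        case True
        then show ?thesis using XJ fun_cong[OF a1(2), of x] unfolding a_def by auto
      next
        case F: False
        show ?thesis
        proof (cases "x \<in> XK")
          case True
          then have "x \<notin> ?UJ" using XK disj by auto
          then show ?thesis using True F XK fun_cong[OF a2(2), of x] unfolding a_def by auto
        next
          case False
          then show ?thesis using F b by (auto simp: mem_tuples)
        qed
      qed
    qed
    ultimately show "b \<in> ?L" unfolding proj_def by auto
  qed
qed



lemma occ_split:
  assumes fin: "finite I" and IJK: "I = J \<union> K" "J \<inter> K = {}"
    and disj: "\<forall>i\<in>J. \<forall>j\<in>K. A i \<inter> A j = {}"
  shows "{x. occI I A x = 1} = {x. occI J A x = 1} \<union> {x. occI K A x = 1}"
    and "{x. occI J A x = 1} \<subseteq> (\<Union>i\<in>J. A i)"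
    and "{x. occI K A x = 1} \<subseteq> (\<Union>i\<in>K. A i)"
proof -
  have fJ: "finite J" "finite K" using fin IJK by auto
  have sum: "occI I A x = occI J A x + occI K A x" for x
  proof -
    have "{i\<in>I. x \<in> A i} = {i\<in>J. x \<in> A i} \<union> {i\<in>K. x \<in> A i}" using IJK by auto
    then show ?thesis unfolding occI_def using fJ IJK by (simp add: card_Un_disjoint disjoint_iff)
  qed
  have memU: "x \<in> (\<Union>i\<in>L. A i)" if "occI L A x = 1" for L x
  proof (rule ccontr)
    assume "x \<notin> (\<Union>i\<in>L. A i)"
    then have "{i\<in>L. x \<in> A i} = {}" by auto
    then show False using that unfolding occI_def by (metis card.empty zero_neq_one)
  qed
  have zK: "occI K A x = 0" if "x \<in> (\<Union>i\<in>J. A i)" for x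
  proof -
    have "{i\<in>K. x \<in> A i} = {}" using that disj by auto
    then show ?thesis unfolding occI_def by (metis card.empty)
  qed
  have zJ: "occI J A x = 0" if "x \<in> (\<Union>i\<in>K. A i)" for x
  proof -
    have "{i\<in>J. x \<in> A i} = {}" using that disj by auto
    then show ?thesis unfolding occI_def by (metis card.empty)
  qed
  show "{x. occI I A x = 1} = {x. occI J A x = 1} \<union> {x. occI K A x = 1}"
  proof (intro set_eqI iffI)
    fix x assume "x \<in> {x. occI I A x = 1}"
    then show "x \<in> {x. occI J A x = 1} \<union> {x. occI K A x = 1}" using sum[of x] by auto
  next
    fix x assume "x \<in> {x. occI J A x = 1} \<union> {x. occI K A x = 1}"
    then show "x \<in> {x. occI I A x = 1}" using sum[of x] memU zJ zK by auto
  qed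
  show "{x. occI J A x = 1} \<subseteq> (\<Union>i\<in>J. A i)" using memU by blast
  show "{x. occI K A x = 1} \<subseteq> (\<Union>i\<in>K. A i)" using memU by blast
qed

lemma one_side:
  assumes fin: "finite I" and IJK: "I = J \<union> K" "J \<inter> K = {}"
    and disj: "\<forall>i\<in>J. \<forall>j\<in>K. A i \<inter> A j = {}"
    and XK: "{x. occI K A x = 1} = {}"
  shows "{x. occI I A x = 1} = {x. occI J A x = 1}"
    and "proj {x. occI I A x = 1} (joinI I A Rr) =
      (if joinI K A Rr = {} then {} else proj {x. occI J A x = 1} (joinI J A Rr))"
proof -
  note os = occ_split[OF fin IJK disj]
  show X: "{x. occI I A x = 1} = {x. occI J A x = 1}" using os(1) XK by simp
  have "proj {x. occI I A x = 1} (joinI I A Rr) =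
    {b \<in> tuples ({x. occI J A x = 1} \<union> {}). restrict b {x. occI J A x = 1} \<in> proj {x. occI J A x = 1} (joinI J A Rr)
      \<and> restrict b {} \<in> proj {} (joinI K A Rr)}"
    using product_join[OF disj os(2), of "{}" Rr] X IJK by simp
  also have "\<dots> = (if joinI K A Rr = {} then {} else proj {x. occI J A x = 1} (joinI J A Rr))"
  proof (cases "joinI K A Rr = {}")
    case True then show ?thesis by (simp add: proj_def)
  next
    case False
    then obtain a where "a \<in> joinI K A Rr" by auto
    then have "restrict b {} \<in> proj {} (joinI K A Rr)" for b :: "nat \<Rightarrow> 'a"
      unfolding proj_def by (intro image_eqI[of _ _ a]) auto
    then show ?thesis using False proj_tuples[of "{x. occI J A x = 1}" "joinI J A Rr"]
      by (auto simp: restrict_tuples)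
  qed
  finally show "proj {x. occI I A x = 1} (joinI I A Rr) =
      (if joinI K A Rr = {} then {} else proj {x. occI J A x = 1} (joinI J A Rr))" .
qed

lemma main_lower:
  fixes Rr :: "nat \<Rightarrow> (nat \<Rightarrow> 'd) set"
  assumes "finite I" "\<forall>i\<in>I. is_rel (A i) (Rr i)" "\<forall>i\<in>I. card (A i) \<le> 3" "\<forall>x. occI I A x \<le> 2"
    "card {x. occI I A x = 1} \<ge> 2"
    "\<not> degenerate {x. occI I A x = 1} (proj {x. occI I A x = 1} (joinI I A Rr))"
  shows "card {x. occI I A x = 1} \<le> card {i\<in>I. card (A i) = 3} + 2"
  using assms
proof (induction "card I" arbitrary: I rule: less_induct)
  case less
  note fin = less.prems(1)
  have finA: "\<forall>i\<in>I. finite (A i)" using less.prems(2) by (auto simp: is_rel_def)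
  show ?case
  proof (cases "\<forall>J. J \<subseteq> I \<longrightarrow> J \<noteq> {} \<longrightarrow> J \<noteq> I \<longrightarrow> (\<exists>i\<in>J. \<exists>j\<in>I-J. A i \<inter> A j \<noteq> {})")
    case True
    then show ?thesis using count_nosplit[OF fin finA less.prems(3,4)] by blast
  next
    case False
    then obtain J where J: "J \<subseteq> I" "J \<noteq> {}" "J \<noteq> I" and disj: "\<forall>i\<in>J. \<forall>j\<in>I-J. A i \<inter> A j = {}"
      by blast
    define K where "K = I - J"
    have IJK: "I = J \<union> K" "J \<inter> K = {}" using J K_def by auto
    have IKJ: "I = K \<union> J" "K \<inter> J = {}" using IJK by auto
    have disj': "\<forall>i\<in>K. \<forall>j\<in>J. A i \<inter> A j = {}" using disj K_def by blast
    have disjK: "\<forall>i\<in>J. \<forall>j\<in>K. A i \<inter> A j = {}" using disj K_def by blast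
    have finJ: "finite J" "finite K" using fin IJK by auto
    have cardJ: "card J < card I" "card K < card I"
      using J fin K_def by (auto intro!: psubset_card_mono)
    have occsub: "occI L A x \<le> occI I A x" if "L \<subseteq> I" for L x
      unfolding occI_def using that fin by (intro card_mono) auto
    have cnt: "card {i\<in>L. card (A i) = 3} \<le> card {i\<in>I. card (A i) = 3}" if "L \<subseteq> I" for L
      using that fin by (intro card_mono) auto
    let ?X = "\<lambda>L. {x. occI L A x = 1}"
    let ?B = "\<lambda>L. proj (?X L) (joinI L A Rr)"
    have side: "card (?X I) \<le> card {i\<in>I. card (A i) = 3} + 2"
      if L: "L \<subseteq> I" "card L < card I" and XI: "?X I = ?X L"
        and BI: "?B I = (if joinI M A Rr = {} then {} else ?B L)" for L M
    proof (cases "joinI M A Rr = {}")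
      case True
      then show ?thesis using less.prems(5,6) BI empty_degenerate by metis
    next
      case False
      have h1: "\<forall>i\<in>L. is_rel (A i) (Rr i)" "\<forall>i\<in>L. card (A i) \<le> 3"
        using less.prems(2,3) L(1) by auto
      have h2: "\<forall>x. occI L A x \<le> 2" using less.prems(4) occsub[OF L(1)] by (meson order_trans)
      have h3: "card (?X L) \<ge> 2" using less.prems(5) XI by simp
      have h4: "\<not> degenerate (?X L) (?B L)" using less.prems(6) XI BI False by simp
      have "card (?X L) \<le> card {i\<in>L. card (A i) = 3} + 2"
        using less.hyps[OF L(2) finite_subset[OF L(1) fin] h1 h2 h3 h4] .
      then show ?thesis using XI cnt[OF L(1)] by simp
    qed
    show ?thesis
    proof (cases "?X K = {}")
      case True
      show ?thesis by (rule side[OF J(1) cardJ(1) one_side(1)[OF fin IJK disjK True] one_side(2)[OF fin IJK disjK True]])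
    next
      case XKne: False
      show ?thesis
      proof (cases "?X J = {}")
        case True
        have "K \<subseteq> I" using IJK by auto
        then show ?thesis by (rule side[OF _ cardJ(2) one_side(1)[OF fin IKJ disj' True] one_side(2)[OF fin IKJ disj' True]])
      next
        case XJne: False
        note os = occ_split[OF fin IJK disjK]
        have B: "?B I = {b \<in> tuples (?X J \<union> ?X K). restrict b (?X J) \<in> ?B J \<and> restrict b (?X K) \<in> ?B K}"
          using product_join[OF disjK os(2,3), of Rr] os(1) IJK by simp
        let ?Ps = "[(?X J, ?B J), (?X K, ?B K)]"
        have finX: "finite (?X J)" "finite (?X K)"
          using os fin finA IJK by (auto intro: finite_subset)
        have u: "(\<Union>i<length ?Ps. fst (?Ps!i)) = ?X I"
          using os(1) by (auto simp: lessThan_Suc less_Suc_eq numeral_2_eq_2)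
        have dj: "?X J \<inter> ?X K = {}" using os(2,3) disjK by blast
        have "degenerate (?X I) (?B I)"
          unfolding degenerate_def
        proof (intro exI[of _ ?Ps] conjI)
          show "1 < length ?Ps" by simp
          show "\<forall>i<length ?Ps. fst (?Ps!i) \<noteq> {} \<and> is_rel (fst (?Ps!i)) (snd (?Ps!i))"
            using XJne XKne finX proj_tuples by (auto simp: less_Suc_eq is_rel_def)
          show "\<forall>i<length ?Ps. \<forall>j<length ?Ps. i \<noteq> j \<longrightarrow> fst (?Ps!i) \<inter> fst (?Ps!j) = {}"
            using dj by (auto simp: less_Suc_eq)
          show "(\<Union>i<length ?Ps. fst (?Ps!i)) = ?X I" by (rule u)
          show "?B I = {a \<in> tuples (?X I). \<forall>i<length ?Ps. restrict a (fst (?Ps!i)) \<in> snd (?Ps!i)}"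
            using B os(1) by (auto simp: less_Suc_eq)
        qed
        then show ?thesis using less.prems(6) by blast
      qed
    qed
  qed
qed



lemma bridge:
  fixes Fs :: "(nat set \<times> (nat \<Rightarrow> 'd) set) list"
  assumes b: "is_bond_of S R Fs" and st: "subternaric Fs"
    and n2: "card S \<ge> 2" and nd: "\<not> degenerate S R"
  shows "card S \<le> card {i. i < length Fs \<and> card (fst (Fs!i)) = 3} + 2"
proof -
  let ?I = "{..<length Fs}" and ?A = "\<lambda>i. fst (Fs!i)" and ?Rr = "\<lambda>i. snd (Fs!i)"
  have occ: "occ Fs x = occI ?I ?A x" for x
    unfolding occ_def occI_def by (rule arg_cong[where f=card]) auto
  have X: "{x. occI ?I ?A x = 1} = S" using b occ unfolding is_bond_of_def bond_attrs_def by auto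
  have J: "join Fs = joinI ?I ?A ?Rr" unfolding join_def joinI_def by auto
  have R': "R = proj S (join Fs)" using b unfolding is_bond_of_def bond_def by auto
  have B: "proj {x. occI ?I ?A x = 1} (joinI ?I ?A ?Rr) = R"
    unfolding X R' J by simp
  have "card {x. occI ?I ?A x = 1} \<le> card {i\<in>?I. card (?A i) = 3} + 2"
  proof (rule main_lower)
    show "\<forall>i\<in>?I. is_rel (?A i) (?Rr i)" using b unfolding is_bond_of_def bondable_def by auto
    show "\<forall>i\<in>?I. card (?A i) \<le> 3" using st unfolding subternaric_def by auto
    show "\<forall>x. occI ?I ?A x \<le> 2" using b occ unfolding is_bond_of_def bondable_def by metis
  qed (use X B n2 nd in auto)
  moreover have "{i\<in>?I. card (?A i) = 3} = {i. i < length Fs \<and> card (fst (Fs!i)) = 3}" by auto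
  ultimately show ?thesis using X by simp
qed

lemma inj_prod_infinite:
  assumes "infinite (UNIV :: 'd set)"
  shows "\<exists>h :: 'd \<times> 'd \<Rightarrow> 'd. inj h"
proof -
  have "(card_of ((UNIV :: 'd set) \<times> (UNIV :: 'd set)), card_of (UNIV :: 'd set)) \<in> ordIso"
    by (rule card_of_Times_same_infinite[OF assms])
  then have "(card_of ((UNIV :: 'd set) \<times> (UNIV :: 'd set)), card_of (UNIV :: 'd set)) \<in> ordLeq"
    by (rule ordIso_iff_ordLeq[THEN iffD1, THEN conjunct1])
  then have "\<exists>f. inj_on f ((UNIV :: 'd set) \<times> (UNIV :: 'd set)) \<and> f ` ((UNIV :: 'd set) \<times> (UNIV :: 'd set)) \<subseteq> (UNIV :: 'd set)"
    by (rule card_of_ordLeq[THEN iffD2])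
  then have "inj_on (SOME f. inj_on f ((UNIV :: 'd set) \<times> (UNIV :: 'd set)) \<and> f ` ((UNIV :: 'd set) \<times> (UNIV :: 'd set)) \<subseteq> (UNIV :: 'd set)) ((UNIV :: 'd set) \<times> (UNIV :: 'd set))
     \<and> (SOME f. inj_on f ((UNIV :: 'd set) \<times> (UNIV :: 'd set)) \<and> f ` ((UNIV :: 'd set) \<times> (UNIV :: 'd set)) \<subseteq> (UNIV :: 'd set)) ` ((UNIV :: 'd set) \<times> (UNIV :: 'd set)) \<subseteq> (UNIV :: 'd set)"
    by (rule someI_ex)
  then have "inj (SOME f. inj_on f ((UNIV :: 'd set) \<times> (UNIV :: 'd set)) \<and> f ` ((UNIV :: 'd set) \<times> (UNIV :: 'd set)) \<subseteq> (UNIV :: 'd set))"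
    by (simp only: UNIV_Times_UNIV)
  then show ?thesis by (rule exI[of inj])
qed

lemma inj_tuples:
  assumes inf: "infinite (UNIV :: 'd set)" and fin: "finite S"
  shows "\<exists>g :: (nat \<Rightarrow> 'd) \<Rightarrow> 'd. inj_on g (tuples S)"
  using fin
proof (induction S rule: finite_induct)
  case empty
  have "tuples {} = {(\<lambda>_. undefined) :: nat \<Rightarrow> 'd}" by (auto simp: mem_tuples)
  then show ?case by auto
next
  case (insert x S)
  obtain g :: "(nat \<Rightarrow> 'd) \<Rightarrow> 'd" where g: "inj_on g (tuples S)" using insert by blast
  obtain h :: "'d \<times> 'd \<Rightarrow> 'd" where h: "inj h" using inj_prod_infinite[OF inf] by blast
  have "inj_on (\<lambda>a. h (a x, g (restrict a S))) (tuples (insert x S))"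
  proof (rule inj_onI)
    fix a b assume a: "a \<in> tuples (insert x S)" and b: "b \<in> tuples (insert x S)"
      and e: "h (a x, g (restrict a S)) = h (b x, g (restrict b S))"
    then have 1: "a x = b x" and "g (restrict a S) = g (restrict b S)" using h by (auto dest: injD)
    then have 2: "restrict a S = restrict b S" using g by (auto dest: inj_onD)
    show "a = b"
    proof
      fix z
      show "a z = b z"
        using 1 fun_cong[OF 2, of z] a b by (cases "z \<in> S"; cases "z = x") (auto simp: mem_tuples)
    qed
  qed
  then show ?case by blast
qed



lemma construction:
  fixes R :: "(nat \<Rightarrow> 'd) set" and f :: "(nat \<Rightarrow> 'd) \<Rightarrow> 'd"
  assumes rel: "is_rel S R" and n2: "card S \<ge> 2" and f: "inj_on f R"
  shows "\<exists>Fs. is_bond_of S R Fs \<and> subternaric Fs \<and>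
           card {i. i < length Fs \<and> card (fst (Fs!i)) = 3} = card S - 2"
proof -
  define n where "n = card S"
  define xs where "xs = sorted_list_of_set S"
  define N where "N = Suc (Max S)"
  define \<phi> where "\<phi> = (\<lambda>r z. if z \<in> S then r z else f r)"
  define A where "A = (\<lambda>k. insert (xs!k) ((if 1 \<le> k then {N + k - 1} else {}) \<union> (if k + 2 \<le> n then {N + k} else {})))"
  define Fs where "Fs = map (\<lambda>k. (A k, proj (A k) (\<phi> ` R))) [0..<n]"
  have finS: "finite S" using rel by (simp add: is_rel_def)
  have lenxs: "length xs = n" and setxs: "set xs = S" and dxs: "distinct xs"
    using finS by (auto simp: xs_def n_def)
  have xsS: "xs!k \<in> S" if "k < n" for k using that lenxs setxs nth_mem by blast
  have xsinj: "xs!k = xs!j \<longleftrightarrow> k = j" if "k < n" "j < n" for k j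
    using that dxs lenxs nth_eq_iff_index_eq by blast
  have NS: "N + j \<notin> S" for j
  proof
    assume "N + j \<in> S"
    then have "N + j \<le> Max S" using finS by simp
    then show False unfolding N_def by simp
  qed
  have lenFs: "length Fs = n" unfolding Fs_def by simp
  have Fsk: "Fs!k = (A k, proj (A k) (\<phi> ` R))" if "k < n" for k
    unfolding Fs_def using that by simp
  have memA: "z \<in> A k \<longleftrightarrow> z = xs!k \<or> (1 \<le> k \<and> z = N + k - 1) \<or> (k + 2 \<le> n \<and> z = N + k)" for z k
    unfolding A_def by auto
  have occS: "{k. k < n \<and> z \<in> A k} = {j}" if "j < n" "z = xs!j" for z j
  proof -
    have zS: "z \<in> S" using that xsS by simp
    have "z < N"
    proof (rule ccontr)
      assume "\<not> z < N"
      then obtain j' where "z = N + j'" by (metis le_iff_add not_less)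
      then show False using zS NS by simp
    qed
    then have "z \<in> A k \<longleftrightarrow> z = xs!k" for k unfolding memA by auto
    then show ?thesis using that xsinj by auto
  qed
  have occN: "{k. k < n \<and> z \<in> A k} = {j, Suc j}" if "j + 2 \<le> n" "z = N + j" for z j
  proof -
    have "z \<notin> S" using that NS by simp
    then have "z \<noteq> xs!k" if "k < n" for k using xsS that by metis
    then show ?thesis using that unfolding memA by auto
  qed
  have occO: "{k. k < n \<and> z \<in> A k} = {}" if "z \<notin> S" "\<forall>j. j + 2 \<le> n \<longrightarrow> z \<noteq> N + j" for z
  proof -
    have "z \<noteq> xs!k" if "k < n" for k using xsS that \<open>z \<notin> S\<close> by metis
    moreover have False if "k < n" "1 \<le> k" "z = N + k - 1" for k
      using \<open>\<forall>j. j + 2 \<le> n \<longrightarrow> z \<noteq> N + j\<close>[rule_format, of "k - 1"] that by auto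
    ultimately show ?thesis using that unfolding memA by auto
  qed
  have occ_eq: "occ Fs z = card {k. k < n \<and> z \<in> A k}" for z
    unfolding occ_def lenFs by (rule arg_cong[where f=card]) (auto simp: Fsk)
  have occ_cases: "occ Fs z = (if z \<in> S then 1 else if \<exists>j. j + 2 \<le> n \<and> z = N + j then 2 else 0)" for z
  proof (cases "z \<in> S")
    case True
    then obtain j where "j < n" "z = xs!j" using setxs lenxs by (metis in_set_conv_nth)
    then show ?thesis using occS True occ_eq by simp
  next
    case False
    show ?thesis
    proof (cases "\<exists>j. j + 2 \<le> n \<and> z = N + j")
      case True
      then obtain j where "j + 2 \<le> n" "z = N + j" by blast
      then show ?thesis using occN False occ_eq by simp
    next
      case F2: False
      then show ?thesis using occO[of z] False occ_eq by auto
    qed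
  qed
  have attrs: "bond_attrs Fs = S" unfolding bond_attrs_def using occ_cases by auto
  have finA: "finite (A k)" for k unfolding A_def by auto
  have bondable: "bondable Fs"
    unfolding bondable_def
  proof (intro conjI allI impI)
    fix i assume "i < length Fs"
    then have "Fs!i = (A i, proj (A i) (\<phi> ` R))" using Fsk lenFs by simp
    then show "is_rel (fst (Fs!i)) (snd (Fs!i))" using finA proj_tuples[of "A i" "\<phi> ` R"]
      by (simp add: is_rel_def)
  next
    fix x show "occ Fs x \<le> 2" using occ_cases[of x] by auto
  qed
  have cardA: "card (A k) = (if 1 \<le> k \<and> k + 2 \<le> n then 3 else if 1 \<le> k \<or> k + 2 \<le> n then 2 else 1)"
    if "k < n" for k
  proof -
    have "xs!k \<le> Max S" using xsS[OF that] finS by simp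
    then have x1: "xs!k < N" unfolding N_def by simp
    show ?thesis unfolding A_def using x1 by (auto simp: card_insert_if)
  qed
  have sub: "subternaric Fs" unfolding subternaric_def using cardA lenFs Fsk by auto
  have cnt: "{i. i < length Fs \<and> card (fst (Fs!i)) = 3} = {1..<n-1}"
  proof (intro set_eqI)
    fix i
    show "i \<in> {i. i < length Fs \<and> card (fst (Fs!i)) = 3} \<longleftrightarrow> i \<in> {1..<n-1}"
    proof (cases "i < n")
      case True then show ?thesis using cardA[OF True] Fsk[OF True] lenFs by auto
    next
      case False then show ?thesis using lenFs by auto
    qed
  qed
  let ?U = "\<Union>i<length Fs. fst (Fs!i)"
  have U: "?U = (\<Union>k<n. A k)" using lenFs Fsk by auto
  have SU: "S \<subseteq> (\<Union>k<n. A k)"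
  proof
    fix z assume "z \<in> S"
    then obtain j where "j < n" "z = xs!j" using setxs lenxs by (metis in_set_conv_nth)
    then show "z \<in> (\<Union>k<n. A k)" unfolding A_def by auto
  qed
  have join: "join Fs = (\<lambda>r. restrict (\<phi> r) (\<Union>k<n. A k)) ` R"
  proof
    show "(\<lambda>r. restrict (\<phi> r) (\<Union>k<n. A k)) ` R \<subseteq> join Fs"
    proof
      fix a assume "a \<in> (\<lambda>r. restrict (\<phi> r) (\<Union>k<n. A k)) ` R"
      then obtain r where r: "r \<in> R" "a = restrict (\<phi> r) (\<Union>k<n. A k)" by auto
      have "restrict a (A k) \<in> proj (A k) (\<phi> ` R)" if "k < n" for k
      proof -
        have "restrict a (A k) = restrict (\<phi> r) (A k)" using r that by (auto simp: restrict_def)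
        then show ?thesis using r unfolding proj_def by auto
      qed
      then show "a \<in> join Fs" unfolding join_def U using r lenFs Fsk by auto
    qed
  next
    show "join Fs \<subseteq> (\<lambda>r. restrict (\<phi> r) (\<Union>k<n. A k)) ` R"
    proof
      fix a assume a: "a \<in> join Fs"
      then have at: "a \<in> tuples (\<Union>k<n. A k)" unfolding join_def U by auto
      have "\<forall>k<n. \<exists>r\<in>R. restrict a (A k) = restrict (\<phi> r) (A k)"
      proof (intro allI impI)
        fix k assume k: "k < n"
        have "restrict a (A k) \<in> proj (A k) (\<phi> ` R)" using a k Fsk[OF k] lenFs unfolding join_def by auto
        then show "\<exists>r\<in>R. restrict a (A k) = restrict (\<phi> r) (A k)" unfolding proj_def by auto
      qed
      then obtain rr where rr: "\<forall>k<n. rr k \<in> R \<and> restrict a (A k) = restrict (\<phi> (rr k)) (A k)"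
        by metis
      have val: "a z = \<phi> (rr k) z" if "k < n" "z \<in> A k" for k z
        using fun_cong[OF conjunct2[OF rr[rule_format, OF that(1)]], of z] that by simp
      have same: "k < n \<Longrightarrow> rr k = rr 0" for k
      proof (induction k)
        case 0 then show ?case by simp
      next
        case (Suc k)
        have l1: "N + k \<in> A k" "N + k \<in> A (Suc k)" using Suc.prems unfolding memA by auto
        have "f (rr k) = f (rr (Suc k))"
          using val[OF _ l1(1)] val[OF Suc.prems l1(2)] Suc.prems NS unfolding \<phi>_def by auto
        then have "rr k = rr (Suc k)" using f rr Suc.prems by (auto dest: inj_onD)
        then show ?case using Suc by simp
      qed
      have "a = restrict (\<phi> (rr 0)) (\<Union>k<n. A k)"
      proof
        fix z show "a z = restrict (\<phi> (rr 0)) (\<Union>k<n. A k) z"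
        proof (cases "z \<in> (\<Union>k<n. A k)")
          case True
          then obtain k where k: "k < n" "z \<in> A k" by auto
          then have "a z = \<phi> (rr k) z" by (rule val)
          moreover have "rr k = rr 0" using same k(1) by blast
          ultimately show ?thesis using True by simp
        next
          case False then show ?thesis using at by (auto simp: mem_tuples)
        qed
      qed
      moreover have "rr 0 \<in> R" using rr n2 n_def by auto
      ultimately show "a \<in> (\<lambda>r. restrict (\<phi> r) (\<Union>k<n. A k)) ` R" by auto
    qed
  qed
  have "bond Fs = R"
  proof -
    have "restrict (restrict (\<phi> r) (\<Union>k<n. A k)) S = r" if "r \<in> R" for r
    proof
      fix z
      have "r \<in> tuples S" using rel that by (auto simp: is_rel_def)
      then show "restrict (restrict (\<phi> r) (\<Union>k<n. A k)) S z = r z"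
        using SU unfolding \<phi>_def by (cases "z \<in> S") (auto simp: mem_tuples)
    qed
    then show ?thesis unfolding bond_def attrs join proj_def image_image by simp
  qed
  then have "is_bond_of S R Fs" unfolding is_bond_of_def using bondable attrs by simp
  moreover have "card {i. i < length Fs \<and> card (fst (Fs!i)) = 3} = card S - 2"
    using cnt n_def by simp
  ultimately show ?thesis using sub by blast
qed


theorem theorem43:
  fixes S :: "nat set" and R :: "(nat \<Rightarrow> 'd) set"
  assumes rel: "is_rel S R"
    and nondeg: "\<not> degenerate S R"
    and n2: "card S \<ge> 2"
  shows "ternarity S R \<ge> enat (card S - 2)
    \<and> (card S = 3 \<longrightarrow> bond_irreducible S R)
    \<and> ((\<exists>f :: (nat \<Rightarrow> 'd) \<Rightarrow> 'd. inj_on f R) \<longrightarrow> ternarity S R = enat (card S - 2))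
    \<and> (infinite (UNIV :: 'd set) \<longrightarrow> ternarity S R = enat (card S - 2))"
proof -
  have low: "enat (card S - 2) \<le> ternarity S R"
    unfolding ternarity_def
  proof (rule Inf_greatest)
    fix x assume "x \<in> {enat (card {i. i < length Fs \<and> card (fst (Fs!i)) = 3}) | Fs.
                          is_bond_of S R Fs \<and> subternaric Fs}"
    then obtain Fs where Fs: "x = enat (card {i. i < length Fs \<and> card (fst (Fs!i)) = 3})"
      "is_bond_of S R Fs" "subternaric Fs" by blast
    have "card S \<le> card {i. i < length Fs \<and> card (fst (Fs!i)) = 3} + 2"
      by (rule bridge[OF Fs(2,3) n2 nondeg])
    then show "enat (card S - 2) \<le> x" using Fs(1) by simp
  qed
  have irr: "card S = 3 \<longrightarrow> bond_irreducible S R"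
  proof
    assume c3: "card S = 3"
    show "bond_irreducible S R" unfolding bond_irreducible_def bond_reducible_def
    proof
      assume "\<exists>Fs. is_bond_of S R Fs \<and> (\<forall>i<length Fs. 0 < card (fst (Fs!i)) \<and> card (fst (Fs!i)) < card S)"
      then obtain Fs where b: "is_bond_of S R Fs" and lt: "\<forall>i<length Fs. card (fst (Fs!i)) < 3"
        using c3 by auto
      have st: "subternaric Fs" using lt unfolding subternaric_def by (simp add: less_imp_le)
      have e: "{i. i < length Fs \<and> card (fst (Fs!i)) = 3} = {}" using lt by auto
      have "card S \<le> card {i. i < length Fs \<and> card (fst (Fs!i)) = 3} + 2"
        by (rule bridge[OF b st n2 nondeg])
      then have "card S \<le> 2" unfolding e by simp
      then show False using c3 by simp
    qed
  qed
  have up: "(\<exists>f :: (nat \<Rightarrow> 'd) \<Rightarrow> 'd. inj_on f R) \<longrightarrow> ternarity S R = enat (card S - 2)"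
  proof
    assume "\<exists>f :: (nat \<Rightarrow> 'd) \<Rightarrow> 'd. inj_on f R"
    then obtain f :: "(nat \<Rightarrow> 'd) \<Rightarrow> 'd" where f: "inj_on f R" by blast
    obtain Fs where Fs: "is_bond_of S R Fs" "subternaric Fs"
      "card {i. i < length Fs \<and> card (fst (Fs!i)) = 3} = card S - 2"
      using construction[OF rel n2 f] by blast
    have mem: "enat (card S - 2) \<in> {enat (card {i. i < length Fs \<and> card (fst (Fs!i)) = 3}) | Fs.
                          is_bond_of S R Fs \<and> subternaric Fs}"
      unfolding mem_Collect_eq by (intro exI[of _ Fs] conjI) (simp_all add: Fs)
    have "ternarity S R \<le> enat (card S - 2)"
      unfolding ternarity_def by (rule Inf_lower[OF mem])
    then show "ternarity S R = enat (card S - 2)" using low by simp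
  qed
  have inf: "infinite (UNIV :: 'd set) \<longrightarrow> ternarity S R = enat (card S - 2)"
  proof
    assume i: "infinite (UNIV :: 'd set)"
    have finS: "finite S" using rel by (simp add: is_rel_def)
    obtain g :: "(nat \<Rightarrow> 'd) \<Rightarrow> 'd" where g: "inj_on g (tuples S)"
      using inj_tuples[OF i finS] by blast
    have "inj_on g R" using g rel by (auto simp: is_rel_def intro: inj_on_subset)
    then show "ternarity S R = enat (card S - 2)" using up by blast
  qed
  show ?thesis using low irr up inf by blast
qed

end
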